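(* For every integer $m\geq 2$, $$\frac{H_{m+1}}{\log 2}-0.35<e_m<\frac{H_{m+1}}{\log 2}-0.31.$$
   Context: $H_n=\sum_{j=1}^{n}\frac1j$ denotes the $n$-th harmonic number. The sequence $(e_m)_{m\geq0}$ of rational numbers is defined by $e_0=0$ and, for $m\geq1$, $$e_m=\frac{2^{m+1}+\sum_{j=1}^{m}\binom{m+1}{j}e_{m-j}}{2^{m+1}-2}.$$ *)

theory Defs
  imports "HOL-Analysis.Analysis"
begin

function e_seq :: "nat \<Rightarrow> rat" where
  "e_seq m = (if m = 0 then 0 else
     (2 ^ (m + 1) + (\<Sum>j\<in>{1..m}. of_nat ((m + 1) choose j) * e_seq (m - j)))
       / (2 ^ (m + 1) - 2))"
  by auto
termination
  by (relation "Wellfounded.measure id") auto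

declare e_seq.simps [simp del]

end

theory Submission
  imports Defs
begin


lemma e_step:
  assumes "n \<ge> 1"
  shows "e_seq n = (2^(n+1) + (\<Sum>i<n. of_nat ((n+1) choose (i+1)) * e_seq i)) / (2^(n+1) - 2)"
proof -
  have "(\<Sum>j\<in>{1..n}. of_nat ((n + 1) choose j) * e_seq (n - j)) = (\<Sum>i<n. of_nat ((n+1) choose (i+1)) * e_seq i)"
  proof (rule sum.reindex_bij_witness[where i="\<lambda>i. n - i" and j="\<lambda>j. n - j"])
    fix j assume j: "j \<in> {1..n}"
    have a: "n - j + 1 = (n + 1) - j" using j by auto
    have "(n + 1) choose j = (n + 1) choose ((n + 1) - j)" using j by (intro binomial_symmetric) auto
    then show "of_nat ((n + 1) choose (n - j + 1)) * e_seq (n - j) = of_nat ((n + 1) choose j) * e_seq (n - j)"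
      unfolding a by simp
  qed auto
  then show ?thesis using assms by (subst e_seq.simps) simp
qed

lemma ev0: "e_seq 0 = 0" by (simp add: e_seq.simps)

lemma ev1: "e_seq 1 = 2"
  by (subst e_step) (simp_all add: ev0)

lemma ev1s: "e_seq (Suc 0) = 2" using ev1 by simp


lemma ev2: "e_seq 2 = 7/3"
  by (subst e_step) (simp_all add: lessThan_nat_numeral binomial_fact fact_numeral ev0 ev1 ev1s)

lemma ev3: "e_seq 3 = 8/3"
  by (subst e_step) (simp_all add: lessThan_nat_numeral binomial_fact fact_numeral ev0 ev1 ev1s ev2)

lemma ev4: "e_seq 4 = 133/45"
  by (subst e_step) (simp_all add: lessThan_nat_numeral binomial_fact fact_numeral ev0 ev1 ev1s ev2 ev3)

lemma ev5: "e_seq 5 = 16/5"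
  by (subst e_step) (simp_all add: lessThan_nat_numeral binomial_fact fact_numeral ev0 ev1 ev1s ev2 ev3 ev4)

lemma ev6: "e_seq 6 = 3221/945"
  by (subst e_step) (simp_all add: lessThan_nat_numeral binomial_fact fact_numeral ev0 ev1 ev1s ev2 ev3 ev4 ev5)

lemma ev7: "e_seq 7 = 3392/945"
  by (subst e_step) (simp_all add: lessThan_nat_numeral binomial_fact fact_numeral ev0 ev1 ev1s ev2 ev3 ev4 ev5 ev6)

lemma ev8: "e_seq 8 = 100391/26775"
  by (subst e_step) (simp_all add: lessThan_nat_numeral binomial_fact fact_numeral ev0 ev1 ev1s ev2 ev3 ev4 ev5 ev6 ev7)

lemma ev9: "e_seq 9 = 20848/5355"
  by (subst e_step) (simp_all add: lessThan_nat_numeral binomial_fact fact_numeral ev0 ev1 ev1s ev2 ev3 ev4 ev5 ev6 ev7 ev8)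

lemma ev10: "e_seq 10 = 163287/40579"
  by (subst e_step) (simp_all add: lessThan_nat_numeral binomial_fact fact_numeral ev0 ev1 ev1s ev2 ev3 ev4 ev5 ev6 ev7 ev8 ev9)

lemma ev11: "e_seq 11 = 7567072/1826055"
  by (subst e_step) (simp_all add: lessThan_nat_numeral binomial_fact fact_numeral ev0 ev1 ev1s ev2 ev3 ev4 ev5 ev6 ev7 ev8 ev9 ev10)

lemma ev12: "e_seq 12 = 10605587147/2492565075"
  by (subst e_step) (simp_all add: lessThan_nat_numeral binomial_fact fact_numeral ev0 ev1 ev1s ev2 ev3 ev4 ev5 ev6 ev7 ev8 ev9 ev10 ev11)

lemma ev13: "e_seq 13 = 1551804656/356080725"
  by (subst e_step) (simp_all add: lessThan_nat_numeral binomial_fact fact_numeral ev0 ev1 ev1s ev2 ev3 ev4 ev5 ev6 ev7 ev8 ev9 ev10 ev11 ev12)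


lemmas e_vals = ev0 ev1 ev2 ev3 ev4 ev5 ev6 ev7 ev8 ev9 ev10 ev11 ev12 ev13


lemma e_seq_Suc:
  "e_seq (Suc m) = (2 ^ (m + 2) + (\<Sum>j\<in>{1..m+1}. of_nat ((m + 2) choose j) * e_seq (m + 1 - j))) / (2 ^ (m + 2) - 2)"
  by (subst e_seq.simps) (simp add: add.commute)

definition L :: "nat \<Rightarrow> real" where "L n = real_of_rat (e_seq (n - 1))"
definition S :: "nat \<Rightarrow> real" where "S n = (\<Sum>j<Suc n. (1/2)^j / real j)"
definition s :: "nat \<Rightarrow> real" where "s n = ln 2 * L n - harm n"

lemma rec_L:
  assumes "n \<ge> 2"
  shows "(2^n - 2) * L n = 2^n + (\<Sum>k\<in>{1..n-1}. real (n choose k) * L k)"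
proof -
  obtain m where n: "n = Suc (Suc m)" using assms by (metis add_2_eq_Suc le_Suc_ex)
  have d: "(2::rat)^(m+2) - 2 \<noteq> 0"
  proof -
    have "(2::rat)^(m+2) = 4 * 2^m" by (simp add: power_add)
    moreover have "(1::rat) \<le> 2^m" by simp
    ultimately show ?thesis by linarith
  qed
  have r: "(2^(m+2) - 2) * e_seq (Suc m) = 2^(m+2) + (\<Sum>j\<in>{1..m+1}. of_nat ((m+2) choose j) * e_seq (m+1-j))"
    using d by (subst e_seq_Suc) simp
  have rev: "(\<Sum>j\<in>{1..m+1}. of_nat ((m+2) choose j) * e_seq (m+1-j))
      = (\<Sum>k\<in>{1..m+1}. of_nat ((m+2) choose k) * e_seq (k - 1))"
  proof -
    have "(\<Sum>j\<in>{1..m+1}. of_nat ((m+2) choose j) * e_seq (m+1-j))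
      = (\<Sum>j\<in>{1..m+1}. of_nat ((m+2) choose (m + 1 + 1 - j)) * e_seq (m+1-(m + 1 + 1 - j)))"
      by (rule sum.atLeastAtMost_rev)
    also have "\<dots> = (\<Sum>k\<in>{1..m+1}. of_nat ((m+2) choose k) * e_seq (k - 1))"
    proof (rule sum.cong)
      fix k assume k: "k \<in> {1..m+1}"
      have "(m+2) choose (m + 1 + 1 - k) = (m+2) choose k"
        using k binomial_symmetric[of k "m+2"] by auto
      moreover have "m+1-(m + 1 + 1 - k) = k - 1" using k by auto
      ultimately show "of_nat ((m+2) choose (m + 1 + 1 - k)) * e_seq (m+1-(m + 1 + 1 - k)) = of_nat ((m+2) choose k) * (e_seq (k - 1) :: rat)"
        by simp
    qed simp
    finally show ?thesis .
  qed
  have "real_of_rat ((2^(m+2) - 2) * e_seq (Suc m)) = real_of_rat (2^(m+2) + (\<Sum>k\<in>{1..m+1}. of_nat ((m+2) choose k) * e_seq (k - 1)))"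
    using r rev by simp
  then have "(2^(m+2) - 2) * real_of_rat (e_seq (Suc m)) = 2^(m+2) + (\<Sum>k\<in>{1..m+1}. real ((m+2) choose k) * real_of_rat (e_seq (k - 1)))"
    by (simp add: of_rat_mult of_rat_add of_rat_sum of_rat_diff of_rat_power)
  then show ?thesis by (simp add: n L_def)
qed

lemma split_sum:
  fixes f :: "nat \<Rightarrow> real"
  assumes "1 \<le> n"
  shows "(\<Sum>k\<le>n. f k) = f 0 + f n + (\<Sum>k\<in>{1..n-1}. f k)"
proof -
  have "{..n} = insert 0 (insert n {1..n-1})" using assms by auto
  then show ?thesis using assms by simp
qed

lemma binom_inv:
  "(\<Sum>i\<le>n. real (n choose i) / real (Suc i)) = (2^(Suc n) - 1) / real (Suc n)"
proof -
  have "(\<Sum>i\<le>n. real (n choose i) / real (Suc i)) = (\<Sum>i\<le>n. real (Suc n choose Suc i)) / real (Suc n)"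
    unfolding sum_divide_distrib
  proof (rule sum.cong)
    fix i
    have "real (Suc n) * real (n choose i) = real (Suc n choose Suc i) * real (Suc i)"
      using Suc_times_binomial_eq[of n i] by (metis of_nat_mult)
    then show "real (n choose i) / real (Suc i) = real (Suc n choose Suc i) / real (Suc n)"
      by (simp add: field_simps)
  qed simp
  also have "(\<Sum>i\<le>n. real (Suc n choose Suc i)) = 2^(Suc n) - 1"
  proof -
    have "(\<Sum>k\<le>Suc n. real (Suc n choose k)) = 2^(Suc n)"
      using choose_row_sum[of "Suc n"] by (metis of_nat_numeral of_nat_power of_nat_sum)
    moreover have "(\<Sum>k\<le>Suc n. real (Suc n choose k)) = real (Suc n choose 0) + (\<Sum>i\<le>n. real (Suc n choose Suc i))"
      by (rule sum.atMost_Suc_shift)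
    ultimately show ?thesis by (simp del: binomial_Suc_Suc)
  qed
  finally show ?thesis .
qed

lemma harm_binom: "(\<Sum>k\<le>n. real (n choose k) * harm k) = 2^n * (harm n - S n)"
proof (induction n)
  case 0
  then show ?case by (simp add: S_def harm_def)
next
  case (Suc n)
  have h0: "harm 0 = (0::real)" by (simp add: harm_def)
  have "(\<Sum>k\<le>Suc n. real (Suc n choose k) * harm k)
     = real (Suc n choose 0) * harm 0 + (\<Sum>i\<le>n. real (Suc n choose Suc i) * harm (Suc i))"
    by (rule sum.atMost_Suc_shift)
  also have "\<dots> = (\<Sum>i\<le>n. real (Suc n choose Suc i) * harm (Suc i))"
    by (simp add: h0)
  also have "\<dots> = (\<Sum>i\<le>n. real (n choose i) * harm (Suc i)) + (\<Sum>i\<le>n. real (n choose Suc i) * harm (Suc i))"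
    by (simp add: sum.distrib distrib_right)
  also have "(\<Sum>i\<le>n. real (n choose i) * harm (Suc i)) = (\<Sum>i\<le>n. real (n choose i) * harm i) + (\<Sum>i\<le>n. real (n choose i) / real (Suc i))"
    by (simp add: harm_Suc sum.distrib distrib_left divide_inverse)
  also have "(\<Sum>i\<le>n. real (n choose Suc i) * harm (Suc i)) = (\<Sum>i\<le>n. real (n choose i) * harm i)"
  proof -
    have "(\<Sum>k\<le>Suc n. real (n choose k) * harm k) = real (n choose 0) * harm 0 + (\<Sum>i\<le>n. real (n choose Suc i) * harm (Suc i))"
      by (rule sum.atMost_Suc_shift)
    then have "(\<Sum>k\<le>Suc n. real (n choose k) * harm k) = (\<Sum>i\<le>n. real (n choose Suc i) * harm (Suc i))"
      by (simp add: h0)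
    then show ?thesis by (simp add: binomial_eq_0)
  qed
  finally have F: "(\<Sum>k\<le>Suc n. real (Suc n choose k) * harm k) = 2 * (\<Sum>i\<le>n. real (n choose i) * harm i) + (\<Sum>i\<le>n. real (n choose i) / real (Suc i))"
    by simp
  have hS: "S (Suc n) = S n + (1/2)^(Suc n) / real (Suc n)" by (simp add: S_def)
  have hH: "harm (Suc n) = harm n + 1 / real (Suc n)" by (simp add: harm_Suc inverse_eq_divide)
  have p: "2^(Suc n) * ((1/2::real)^(Suc n) / real (Suc n)) = 1 / real (Suc n)"
  proof -
    have "(2::real)^(Suc n) * (1/2)^(Suc n) = 1" by (simp add: power_mult_distrib[symmetric])
    then show ?thesis by (metis times_divide_eq_right)
  qed
  have q: "2^(Suc n) * (harm (Suc n) - S (Suc n)) = 2 * (2^n * (harm n - S n)) + 2^(Suc n) * (1 / real (Suc n)) - 2^(Suc n) * ((1/2::real)^(Suc n) / real (Suc n))"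
    unfolding hS hH by (simp add: algebra_simps)
  have B: "(\<Sum>i\<le>n. real (n choose i) / real (Suc i)) = 2^(Suc n) * (1 / real (Suc n)) - 1 / real (Suc n)"
    using binom_inv[of n] by (simp add: diff_divide_distrib)
  show ?case unfolding F q p B Suc.IH by simp
qed

lemma ln2_sums: "(\<lambda>j. (1/2)^j / real j) sums ln 2"
proof -
  have "(\<lambda>n. - ((-(-1/2::real))^n) / of_nat n) sums ln (1 + (-1/2))"
    by (rule ln_series') simp
  then have "(\<lambda>n. - (- ((1/2::real)^n) / of_nat n)) sums (- ln (1/2))"
    by (intro sums_minus) simp
  moreover have "ln (1/2::real) = - ln 2" by (simp add: ln_div)
  ultimately show ?thesis by simp
qed

lemma T_bounds: "0 \<le> ln 2 - S n \<and> ln 2 - S n \<le> (1/2)^n / real (Suc n)"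
proof -
  define f where "f = (\<lambda>j. (1/2::real)^j / real j)"
  have tail: "(\<lambda>i. f (i + Suc n)) sums (ln 2 - S n)"
    using ln2_sums sums_iff_shift'[of f "Suc n" "ln 2"] by (simp add: f_def S_def)
  have "0 \<le> ln 2 - S n"
    using tail sums_le[of "\<lambda>_. 0" "\<lambda>i. f (i + Suc n)" 0 "ln 2 - S n"] by (simp add: f_def)
  moreover have "ln 2 - S n \<le> (1/2)^n / real (Suc n)"
  proof -
    have g: "(\<lambda>i. ((1/2)^(Suc n) / real (Suc n)) * (1/2)^i) sums (((1/2)^(Suc n) / real (Suc n)) * (1 / (1 - 1/2)))"
      by (intro sums_mult geometric_sums) simp
    have le: "f (i + Suc n) \<le> ((1/2)^(Suc n) / real (Suc n)) * (1/2)^i" for i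
    proof -
      have "f (i + Suc n) = (1/2)^(i + Suc n) / real (i + Suc n)" by (simp add: f_def)
      also have "\<dots> \<le> (1/2)^(i + Suc n) / real (Suc n)"
        by (intro divide_left_mono) auto
      also have "\<dots> = ((1/2)^(Suc n) / real (Suc n)) * (1/2)^i" by (simp add: power_add)
      finally show ?thesis .
    qed
    have "ln 2 - S n \<le> ((1/2)^(Suc n) / real (Suc n)) * (1 / (1 - 1/2))"
      by (rule sums_le[OF _ tail g]) (use le in auto)
    moreover have "((1/2)^(Suc n) / real (Suc n)) * (1 / (1 - 1/2)) = (1/2::real)^n / real (Suc n)"
    proof -
      have e1: "(1::real) / (1 - 1/2) = 2" by simp
      have e2: "(1/2::real)^(Suc n) * 2 = (1/2)^n" by simp
      show ?thesis unfolding e1 times_divide_eq_left e2 by (rule refl)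
    qed
    ultimately show ?thesis by simp
  qed
  ultimately show ?thesis by blast
qed

lemma S12: "S 12 = 7869871/11354112" by (simp add: S_def eval_nat_numeral)

lemma ln2_num: "0.6931 \<le> ln (2::real)" "ln (2::real) \<le> 0.6932"
proof -
  have "(1/2::real)^12 / real (Suc 12) = 1/53248" by (simp add: power_divide)
  then show "0.6931 \<le> ln (2::real)" "ln (2::real) \<le> 0.6932"
    using T_bounds[of 12] S12 by simp_all
qed



lemma h0: "harm 0 = (0::real)" by (simp add: harm_def)

lemma sum_C:
  assumes "1 \<le> n"
  shows "(\<Sum>k\<in>{1..n-1}. real (n choose k)) = 2^n - 2"
proof -
  have "(\<Sum>k\<le>n. real (n choose k)) = 2^n"
    using choose_row_sum[of n] by (metis of_nat_numeral of_nat_power of_nat_sum)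
  then show ?thesis using split_sum[of n "\<lambda>k. real (n choose k)"] assms by simp
qed

lemma s_rec:
  assumes "n \<ge> 2"
  shows "(2^n - 2) * s n = 2^n * (ln 2 - S n) + harm n + (\<Sum>k\<in>{1..n-1}. real (n choose k) * s k)"
proof -
  have hs: "(\<Sum>k\<in>{1..n-1}. real (n choose k) * harm k) = 2^n * (harm n - S n) - harm n"
    using split_sum[of n "\<lambda>k. real (n choose k) * harm k"] harm_binom[of n] assms by (simp add: h0)
  have R: "(\<Sum>k\<in>{1..n-1}. real (n choose k) * L k) = (2^n - 2) * L n - 2^n"
    using rec_L[OF assms] by simp
  have "(\<Sum>k\<in>{1..n-1}. real (n choose k) * s k) = ln 2 * (\<Sum>k\<in>{1..n-1}. real (n choose k) * L k) - (\<Sum>k\<in>{1..n-1}. real (n choose k) * harm k)"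
    by (simp add: s_def sum_subtractf sum_distrib_left algebra_simps)
  then show ?thesis unfolding R hs by (simp add: s_def algebra_simps)
qed

lemma harm_le: "harm n \<le> real n"
proof -
  have "harm n \<le> (\<Sum>k=1..n. (1::real))" unfolding harm_def
    by (rule sum_mono) (simp add: inverse_le_1_iff)
  then show ?thesis by simp
qed

lemma split3:
  fixes f :: "nat \<Rightarrow> real"
  assumes "n \<ge> 5"
  shows "(\<Sum>k\<in>{1..n-1}. f k) = f 1 + f 2 + f 3 + (\<Sum>k\<in>{4..n-1}. f k)"
proof -
  have "{1..n-1} = insert 1 (insert 2 (insert 3 {4..n-1}))" using assms by auto
  then show ?thesis by simp
qed

lemma choose2_le: "real (n choose 2) \<le> real n ^ 2 / 2"
proof -
  have "(n choose 2) * 2 \<le> n * n"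
    using div_times_less_eq_dividend[of "n * (n - 1)" 2] choose_two[of n]
    by (metis diff_le_self dual_order.trans mult_le_mono2)
  then have "real (n choose 2) * 2 \<le> real n * real n" by (metis of_nat_le_iff of_nat_mult of_nat_numeral)
  then show ?thesis by (simp add: power2_eq_square)
qed

lemma choose3_le: "real (n choose 3) \<le> real n ^ 3"
proof (cases "3 \<le> n")
  case True
  then show ?thesis using binomial_le_pow[OF True] by (metis of_nat_le_iff of_nat_power)
next
  case False
  then show ?thesis by (simp add: binomial_eq_0)
qed

lemma L_vals: "L 1 = 0" "L 2 = 2" "L 3 = 7/3"
proof -
  have a: "(1::nat) - 1 = 0" "(2::nat) - 1 = 1" "(3::nat) - 1 = 2" by simp_all
  show "L 1 = 0" "L 2 = 2" "L 3 = 7/3" unfolding L_def a e_vals by (simp_all add: of_rat_divide)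
qed

lemma harm_small: "harm 1 = (1::real)" "harm 2 = (3/2::real)" "harm 3 = (11/6::real)"
  by (simp_all add: harm_def eval_nat_numeral)

lemma s_small: "s 1 = -1" "s 2 = 2 * ln 2 - 3/2" "s 3 = 7/3 * ln 2 - 11/6"
  unfolding s_def L_vals harm_small by simp_all

lemma twoT: "2^n * (ln 2 - S n) \<le> 1" "0 \<le> 2^n * (ln 2 - S n)"
proof -
  have "2^n * (ln 2 - S n) \<le> 2^n * ((1/2)^n / real (Suc n))"
    using T_bounds[of n] by (intro mult_left_mono) auto
  also have "\<dots> = 1 / real (Suc n)" by (simp add: power_divide)
  also have "\<dots> \<le> 1" by simp
  finally show "2^n * (ln 2 - S n) \<le> 1" .
  show "0 \<le> 2^n * (ln 2 - S n)" using T_bounds[of n] by simp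
qed

lemma step:
  assumes n: "n \<ge> 15" and lo: "-0.25 \<le> lo" "lo \<le> -0.23" and hi: "-0.22 \<le> hi" "hi \<le> -0.21"
    and H: "\<forall>k\<in>{4..n-1}. lo \<le> s k \<and> s k \<le> hi"
  shows "(2^n - 2) * (s n - hi) \<le> real n^3/100" "(2^n - 2) * (s n - lo) \<ge> - real n"
proof -
  have n2: "n \<ge> 2" "n \<ge> 5" "n \<ge> 1" using n by auto
  have gen: "(2^n - 2) * (s n - c) = 2^n * (ln 2 - S n) + harm n + (\<Sum>k\<in>{1..n-1}. real (n choose k) * (s k - c))" for c
  proof -
    have "(\<Sum>k\<in>{1..n-1}. real (n choose k) * (s k - c)) = (\<Sum>k\<in>{1..n-1}. real (n choose k) * s k) - c * (\<Sum>k\<in>{1..n-1}. real (n choose k))"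
      by (simp add: algebra_simps sum_subtractf sum_distrib_left)
    then have e: "(\<Sum>k\<in>{1..n-1}. real (n choose k) * (s k - c)) = (\<Sum>k\<in>{1..n-1}. real (n choose k) * s k) - c * (2^n - 2)"
      using sum_C[OF n2(3)] by simp
    have "(2^n - 2) * (s n - c) = (2^n - 2) * s n - c * (2^n - 2)" by (simp add: algebra_simps)
    then show ?thesis unfolding e using s_rec[OF n2(1)] by linarith
  qed
  note l2 = ln2_num
  have c1: "real (n choose 1) = real n" by simp
  have hn: "harm n \<le> real n" "0 \<le> (harm n :: real)" using harm_le[of n] harm_nonneg[where n=n and 'a=real] by auto
  have x: "real n \<ge> 15" using n by simp
  have p2: "real n ^ 2 \<le> real n ^ 3 / 15"
  proof -
    have "15 * real n ^ 2 \<le> real n * real n ^ 2" by (rule mult_right_mono[OF x]) simp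
    then show ?thesis by (simp add: power3_eq_cube power2_eq_square field_simps)
  qed
  have p1: "real n \<le> real n ^ 2 / 15"
  proof -
    have "15 * real n \<le> real n * real n" by (rule mult_right_mono[OF x]) simp
    then show ?thesis by (simp add: power2_eq_square field_simps)
  qed
  have p0: "15 \<le> real n" using x by simp
  have sumU: "(\<Sum>k\<in>{4..n-1}. real (n choose k) * (s k - hi)) \<le> 0"
    by (rule sum_nonpos) (use H in \<open>auto intro: mult_nonneg_nonpos\<close>)
  have g2: "real (n choose 2) * (s 2 - hi) \<le> real n ^ 2 / 2 * (107/1000)"
  proof -
    have a: "s 2 - hi \<le> (107/1000)" using s_small l2 hi by simp
    have b: "0 \<le> s 2 - hi" using s_small l2 hi by simp
    show ?thesis using mult_mono[OF choose2_le a _ b] by simp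
  qed
  have g3: "real (n choose 3) * (s 3 - hi) \<le> real n ^ 3 * (42/10000)"
  proof -
    have a: "s 3 - hi \<le> (42/10000)" using s_small l2 hi by simp
    have "real (n choose 3) * (s 3 - hi) \<le> real (n choose 3) * (42/10000)" by (rule mult_left_mono[OF a]) simp
    also have "\<dots> \<le> real n ^ 3 * (42/10000)" by (rule mult_right_mono[OF choose3_le]) simp
    finally show ?thesis .
  qed
  have g1: "real (n choose 1) * (s 1 - hi) \<le> - 78/100 * real n"
  proof -
    have a: "s 1 - hi \<le> -78/100" using s_small hi by simp
    have "real n * (s 1 - hi) \<le> real n * (-78/100)" by (rule mult_left_mono[OF a]) simp
    then show ?thesis by simp
  qed
  show "(2^n - 2) * (s n - hi) \<le> real n^3/100"
    unfolding gen split3[OF n2(2)] using twoT[of n] g1 g2 g3 sumU hn p0 p1 p2 by linarith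
  have sumL: "(\<Sum>k\<in>{4..n-1}. real (n choose k) * (s k - lo)) \<ge> 0"
    by (rule sum_nonneg) (use H in auto)
  have f2: "real (n choose 2) * (s 2 - lo) \<ge> 0" using s_small l2 lo by simp
  have f3: "real (n choose 3) * (s 3 - lo) \<ge> 0" using s_small l2 lo by simp
  have f1: "real (n choose 1) * (s 1 - lo) \<ge> - real n"
  proof -
    have a: "-1 \<le> s 1 - lo" using s_small lo by simp
    have "real n * (-1) \<le> real n * (s 1 - lo)" by (rule mult_left_mono[OF a]) simp
    then show ?thesis by simp
  qed
  show "(2^n - 2) * (s n - lo) \<ge> - real n"
    unfolding gen split3[OF n2(2)] using twoT[of n] f1 f2 f3 sumL hn by linarith
qed



lemma chk:
  assumes "s k = ln 2 * a - h" "h + 343/81920 \<le> 6931/10000 * (a + 35/100)"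
    "6932/10000 * (a + 31/100) \<le> h - 343/81920" "0 \<le> a"
  shows "-(35/100) * ln 2 + 343/81920 \<le> s k \<and> s k \<le> -(31/100) * ln 2 - 343/81920"
proof -
  have l: "6931/10000 * (a + 35/100) \<le> ln 2 * (a + 35/100)"
    by (rule mult_right_mono) (use ln2_num assms(4) in auto)
  have u: "ln 2 * (a + 31/100) \<le> 6932/10000 * (a + 31/100)"
    by (rule mult_right_mono) (use ln2_num assms(4) in auto)
  have e1: "ln 2 * (a + 35/100) = ln 2 * a + 35/100 * ln 2" by (simp add: algebra_simps)
  have e2: "ln 2 * (a + 31/100) = ln 2 * a + 31/100 * ln 2" by (simp add: algebra_simps)
  show ?thesis using assms l u e1 e2 by linarith
qed


lemma harm_num: "harm (numeral n) = harm (pred_numeral n) + inverse (numeral n :: real)"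
proof -
  have e: "Suc (pred_numeral n) = numeral n" by (simp add: numeral_eq_Suc)
  show ?thesis using harm_Suc[of "pred_numeral n", where 'a=real] unfolding e by simp
qed

lemma harm_4: "harm 4 = (25/12 :: real)" using harm_small(3) by (simp add: harm_num)

lemma s_4: "s 4 = ln 2 * (8/3) - (25/12)"
proof -
  have a: "(4::nat) - 1 = 3" by simp
  show ?thesis unfolding s_def L_def a e_vals harm_4 by (simp add: of_rat_divide)
qed

lemma base_4: "-(35/100) * ln 2 + 343/81920 \<le> s 4 \<and> s 4 \<le> -(31/100) * ln 2 - 343/81920"
  by (rule chk[OF s_4]) simp_all

lemma harm_5: "harm 5 = (137/60 :: real)" using harm_4 by (simp add: harm_num)

lemma s_5: "s 5 = ln 2 * (133/45) - (137/60)"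
proof -
  have a: "(5::nat) - 1 = 4" by simp
  show ?thesis unfolding s_def L_def a e_vals harm_5 by (simp add: of_rat_divide)
qed

lemma base_5: "-(35/100) * ln 2 + 343/81920 \<le> s 5 \<and> s 5 \<le> -(31/100) * ln 2 - 343/81920"
  by (rule chk[OF s_5]) simp_all

lemma harm_6: "harm 6 = (49/20 :: real)" using harm_5 by (simp add: harm_num)

lemma s_6: "s 6 = ln 2 * (16/5) - (49/20)"
proof -
  have a: "(6::nat) - 1 = 5" by simp
  show ?thesis unfolding s_def L_def a e_vals harm_6 by (simp add: of_rat_divide)
qed

lemma base_6: "-(35/100) * ln 2 + 343/81920 \<le> s 6 \<and> s 6 \<le> -(31/100) * ln 2 - 343/81920"
  by (rule chk[OF s_6]) simp_all

lemma harm_7: "harm 7 = (363/140 :: real)" using harm_6 by (simp add: harm_num)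

lemma s_7: "s 7 = ln 2 * (3221/945) - (363/140)"
proof -
  have a: "(7::nat) - 1 = 6" by simp
  show ?thesis unfolding s_def L_def a e_vals harm_7 by (simp add: of_rat_divide)
qed

lemma base_7: "-(35/100) * ln 2 + 343/81920 \<le> s 7 \<and> s 7 \<le> -(31/100) * ln 2 - 343/81920"
  by (rule chk[OF s_7]) simp_all

lemma harm_8: "harm 8 = (761/280 :: real)" using harm_7 by (simp add: harm_num)

lemma s_8: "s 8 = ln 2 * (3392/945) - (761/280)"
proof -
  have a: "(8::nat) - 1 = 7" by simp
  show ?thesis unfolding s_def L_def a e_vals harm_8 by (simp add: of_rat_divide)
qed

lemma base_8: "-(35/100) * ln 2 + 343/81920 \<le> s 8 \<and> s 8 \<le> -(31/100) * ln 2 - 343/81920"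
  by (rule chk[OF s_8]) simp_all

lemma harm_9: "harm 9 = (7129/2520 :: real)" using harm_8 by (simp add: harm_num)

lemma s_9: "s 9 = ln 2 * (100391/26775) - (7129/2520)"
proof -
  have a: "(9::nat) - 1 = 8" by simp
  show ?thesis unfolding s_def L_def a e_vals harm_9 by (simp add: of_rat_divide)
qed

lemma base_9: "-(35/100) * ln 2 + 343/81920 \<le> s 9 \<and> s 9 \<le> -(31/100) * ln 2 - 343/81920"
  by (rule chk[OF s_9]) simp_all

lemma harm_10: "harm 10 = (7381/2520 :: real)" using harm_9 by (simp add: harm_num)

lemma s_10: "s 10 = ln 2 * (20848/5355) - (7381/2520)"
proof -
  have a: "(10::nat) - 1 = 9" by simp
  show ?thesis unfolding s_def L_def a e_vals harm_10 by (simp add: of_rat_divide)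
qed

lemma base_10: "-(35/100) * ln 2 + 343/81920 \<le> s 10 \<and> s 10 \<le> -(31/100) * ln 2 - 343/81920"
  by (rule chk[OF s_10]) simp_all

lemma harm_11: "harm 11 = (83711/27720 :: real)" using harm_10 by (simp add: harm_num)

lemma s_11: "s 11 = ln 2 * (163287/40579) - (83711/27720)"
proof -
  have a: "(11::nat) - 1 = 10" by simp
  show ?thesis unfolding s_def L_def a e_vals harm_11 by (simp add: of_rat_divide)
qed

lemma base_11: "-(35/100) * ln 2 + 343/81920 \<le> s 11 \<and> s 11 \<le> -(31/100) * ln 2 - 343/81920"
  by (rule chk[OF s_11]) simp_all

lemma harm_12: "harm 12 = (86021/27720 :: real)" using harm_11 by (simp add: harm_num)

lemma s_12: "s 12 = ln 2 * (7567072/1826055) - (86021/27720)"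
proof -
  have a: "(12::nat) - 1 = 11" by simp
  show ?thesis unfolding s_def L_def a e_vals harm_12 by (simp add: of_rat_divide)
qed

lemma base_12: "-(35/100) * ln 2 + 343/81920 \<le> s 12 \<and> s 12 \<le> -(31/100) * ln 2 - 343/81920"
  by (rule chk[OF s_12]) simp_all

lemma harm_13: "harm 13 = (1145993/360360 :: real)" using harm_12 by (simp add: harm_num)

lemma s_13: "s 13 = ln 2 * (10605587147/2492565075) - (1145993/360360)"
proof -
  have a: "(13::nat) - 1 = 12" by simp
  show ?thesis unfolding s_def L_def a e_vals harm_13 by (simp add: of_rat_divide)
qed

lemma base_13: "-(35/100) * ln 2 + 343/81920 \<le> s 13 \<and> s 13 \<le> -(31/100) * ln 2 - 343/81920"
  by (rule chk[OF s_13]) simp_all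

lemma harm_14: "harm 14 = (1171733/360360 :: real)" using harm_13 by (simp add: harm_num)

lemma s_14: "s 14 = ln 2 * (1551804656/356080725) - (1171733/360360)"
proof -
  have a: "(14::nat) - 1 = 13" by simp
  show ?thesis unfolding s_def L_def a e_vals harm_14 by (simp add: of_rat_divide)
qed

lemma base_14: "-(35/100) * ln 2 + 343/81920 \<le> s 14 \<and> s 14 \<le> -(31/100) * ln 2 - 343/81920"
  by (rule chk[OF s_14]) simp_all

definition b :: "nat \<Rightarrow> real" where "b n = real n ^ 3 / (40 * 2^n)"

lemma b14: "b 14 = 343/81920" by (simp add: b_def)

lemma b_pos: "n \<ge> 1 \<Longrightarrow> 0 < b n" by (simp add: b_def)

lemma cubic:
  fixes y :: real
  assumes "y \<ge> 14"
  shows "4 * y^3 \<ge> 3 * (y + 1)^3"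
proof -
  have y2: "0 \<le> y^2" by simp
  have a: "14 * y^2 \<le> y * y^2" by (rule mult_right_mono[OF assms y2])
  have b: "70 * y \<le> 5 * y * y" using mult_right_mono[OF assms, of "5 * y"] assms by (simp add: algebra_simps)
  have c: "y^3 = y * y^2" "y^2 = y * y" by (simp_all add: power3_eq_cube power2_eq_square)
  have d: "(y + 1)^3 = y^3 + 3 * y^2 + 3 * y + 1" by (simp add: power3_eq_cube power2_eq_square algebra_simps)
  show ?thesis using a b c d assms by linarith
qed

lemma bdiff:
  assumes "n \<ge> 14"
  shows "(2^(Suc n) - 2) * (b n - b (Suc n)) \<ge> real (Suc n)^3 / 100"
proof -
  define y where "y = real n"
  define x where "x = real (Suc n)"
  define p :: real where "p = 2^n"
  have y14: "y \<ge> 14" using assms by (simp add: y_def)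
  have xy: "x = y + 1" by (simp add: x_def y_def)
  have p20: "p \<ge> 20"
  proof -
    have "(2::real)^14 \<le> 2^n" by (rule power_increasing) (use assms in auto)
    then show ?thesis by (simp add: p_def)
  qed
  define D where "D = 2 * y^3 - x^3"
  have D: "D \<ge> x^3 / 2" using cubic[OF y14] xy by (simp add: D_def)
  have x3: "0 \<le> x^3" by (simp add: x_def)
  have bb: "b n - b (Suc n) = D / (80 * p)"
    using p20 by (simp add: b_def D_def x_def y_def p_def field_simps)
  have Q: "(2*p - 2) * D \<ge> 9/10 * p * x^3"
  proof -
    have D0: "0 \<le> D" using D x3 by linarith
    have "(2*p - 2) * D \<ge> (18/10 * p) * D" by (rule mult_right_mono) (use p20 D0 in auto)
    moreover have "(18/10 * p) * D \<ge> (18/10 * p) * (x^3/2)" by (rule mult_left_mono) (use p20 D in auto)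
    moreover have "(18/10 * p) * (x^3/2) = 9/10 * p * x^3" by simp
    ultimately show ?thesis by linarith
  qed
  have "real (Suc n)^3 / 100 \<le> ((2*p - 2) * D) / (80 * p)"
  proof -
    have px: "0 \<le> p * x^3" using p20 x3 by simp
    have e1: "x^3 / 100 * (80 * p) = 8/10 * (p * x^3)" by simp
    have e2: "9/10 * p * x^3 = 9/10 * (p * x^3)" by simp
    have "x^3 / 100 * (80 * p) \<le> (2*p - 2) * D" using Q px e1 e2 by linarith
    then show ?thesis using p20 by (simp add: le_divide_eq x_def)
  qed
  also have "\<dots> = (2^(Suc n) - 2) * (b n - b (Suc n))" by (simp add: bb p_def)
  finally show ?thesis .
qed

definition Qp :: "nat \<Rightarrow> bool" where
  "Qp n \<longleftrightarrow> (\<forall>k\<in>{4..n}. -(35/100) * ln 2 + b n \<le> s k \<and> s k \<le> -(31/100) * ln 2 - b n) \<and> b n \<le> 343/81920"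

lemma Qp_base: "Qp 14"
proof -
  have "k \<in> {4..14} \<Longrightarrow> -(35/100) * ln 2 + 343/81920 \<le> s k \<and> s k \<le> -(31/100) * ln 2 - 343/81920" for k
  proof -
    assume "k \<in> {4..14}"
    then have "4 \<le> k \<and> k \<le> 14" by simp
    then have "k = 4 \<or> k = 5 \<or> k = 6 \<or> k = 7 \<or> k = 8 \<or> k = 9 \<or> k = 10 \<or> k = 11 \<or> k = 12 \<or> k = 13 \<or> k = 14"
      by presburger
    then show ?thesis using base_4 base_5 base_6 base_7 base_8 base_9 base_10 base_11 base_12 base_13 base_14
      by auto
  qed
  then show ?thesis unfolding Qp_def b14 by auto
qed

lemma Qp_all: "n \<ge> 14 \<Longrightarrow> Qp n"
proof (induction n rule: nat_induct_at_least)
  case base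
  then show ?case by (rule Qp_base)
next
  case (Suc n)
  have Q: "\<forall>k\<in>{4..n}. -(35/100) * ln 2 + b n \<le> s k \<and> s k \<le> -(31/100) * ln 2 - b n" "b n \<le> 343/81920"
    using Suc.IH unfolding Qp_def by auto
  have bn0: "0 \<le> b n" using b_pos[of n] Suc.hyps by simp
  define lo where "lo = -(35/100) * ln 2 + b n"
  define hi where "hi = -(31/100) * ln 2 - b n"
  note l2 = ln2_num
  have lo: "-0.25 \<le> lo" "lo \<le> -0.23" using l2 Q(2) bn0 by (simp_all add: lo_def)
  have hi: "-0.22 \<le> hi" "hi \<le> -0.21" using l2 Q(2) bn0 by (simp_all add: hi_def)
  have n15: "Suc n \<ge> 15" using Suc.hyps by simp
  have H: "\<forall>k\<in>{4..Suc n - 1}. lo \<le> s k \<and> s k \<le> hi" using Q(1) by (simp add: lo_def hi_def)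
  note st = step[OF n15 lo hi H]
  have bd: "(2^(Suc n) - 2) * (b n - b (Suc n)) \<ge> real (Suc n)^3 / 100" by (rule bdiff) (use Suc.hyps in simp)
  have pos: "(2::real)^(Suc n) - 2 > 0"
  proof -
    have "(2::real)^1 < 2^(Suc n)" by (rule power_strict_increasing) (use Suc.hyps in auto)
    then show ?thesis by simp
  qed
  have cube: "real (Suc n) \<le> real (Suc n)^3 / 100"
  proof -
    have x: "15 \<le> real (Suc n)" using n15 by simp
    have "15 * 15 \<le> real (Suc n) * real (Suc n)" using mult_mono[OF x x] by simp
    then have "100 * real (Suc n) \<le> real (Suc n) * real (Suc n) * real (Suc n)"
      using mult_right_mono[of 100 "real (Suc n) * real (Suc n)" "real (Suc n)"] by simp
    then show ?thesis by (simp add: power3_eq_cube)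
  qed
  have up: "s (Suc n) - hi \<le> b n - b (Suc n)"
  proof -
    have "(2^(Suc n) - 2) * (s (Suc n) - hi) \<le> (2^(Suc n) - 2) * (b n - b (Suc n))"
      using st(1) bd by linarith
    then show ?thesis using pos by (simp add: mult_le_cancel_left)
  qed
  have dn: "-(b n - b (Suc n)) \<le> s (Suc n) - lo"
  proof -
    have "(2^(Suc n) - 2) * (-(b n - b (Suc n))) \<le> (2^(Suc n) - 2) * (s (Suc n) - lo)"
      using st(2) bd cube by (simp add: algebra_simps)
    then show ?thesis using pos by (simp add: mult_le_cancel_left)
  qed
  have bmono: "b (Suc n) \<le> b n"
  proof -
    have "0 \<le> (2^(Suc n) - 2) * (b n - b (Suc n))" using bd by (smt (verit) zero_le_divide_iff zero_le_power of_nat_0_le_iff)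
    then have "0 \<le> b n - b (Suc n)" using pos by (simp add: zero_le_mult_iff)
    then show ?thesis by simp
  qed
  show ?case unfolding Qp_def
  proof (rule conjI)
    show "\<forall>k\<in>{4..Suc n}. -(35/100) * ln 2 + b (Suc n) \<le> s k \<and> s k \<le> -(31/100) * ln 2 - b (Suc n)"
    proof
    fix k assume k: "k \<in> {4..Suc n}"
    show "-(35/100) * ln 2 + b (Suc n) \<le> s k \<and> s k \<le> -(31/100) * ln 2 - b (Suc n)"
    proof (cases "k = Suc n")
      case True
      then show ?thesis using up dn by (simp add: lo_def hi_def)
    next
      case False
      then have "k \<in> {4..n}" using k by auto
      then show ?thesis using Q(1) bmono by force
    qed
    qed
  next
    show "b (Suc n) \<le> 343/81920" using bmono Q(2) by simp
  qed
qed

theorem proposition2: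
  fixes m :: nat
  assumes "m \<ge> 2"
  shows "harm (m + 1) / ln 2 - 0.35 < real_of_rat (e_seq m)
       \<and> real_of_rat (e_seq m) < harm (m + 1) / ln 2 - 0.31"
proof -
  define n where "n = m + 1"
  have l2: "0 < ln (2::real)" by simp
  have bnds: "-(35/100) * ln 2 < s n \<and> s n < -(31/100) * ln 2"
  proof (cases "m = 2")
    case True
    then have "n = 3" by (simp add: n_def)
    then show ?thesis using s_small(3) ln2_num by simp
  next
    case False
    then have n4: "n \<ge> 4" using assms by (simp add: n_def)
    define N where "N = max n 14"
    have "Qp N" by (rule Qp_all) (simp add: N_def)
    moreover have "n \<in> {4..N}" using n4 by (simp add: N_def)
    moreover have "0 < b N" by (rule b_pos) (simp add: N_def)
    ultimately show ?thesis unfolding Qp_def by force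
  qed
  have e: "real_of_rat (e_seq m) = (s n + harm (m + 1)) / ln 2"
    using l2 by (simp add: s_def L_def n_def)
  have "-(35/100) < s n / ln 2" "s n / ln 2 < -(31/100)"
    using bnds l2 by (simp_all add: less_divide_eq divide_less_eq)
  then show ?thesis unfolding e by (simp add: add_divide_distrib)
qed

end
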